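(* Let $p$ be a prime, $d\geq3$ odd, $n\geq2$, $q=p^f$ with $f\in\{1,2,\ldots\}\cup\{\infty\}$ (convention $p^\infty=0$, $f\geq2$ if $p=2$), and let $G=\langle x_1,\ldots,x_d\mid r_0\rangle$ be a one-relator pro-$p$ group (minimal presentation) with $r_0=x_1^q[x_1,{}_n\,x_2][x_2,x_3][x_4,x_5]\cdots[x_{d-1},x_d]\cdot s$, where $s\in S''$ and $S$ is the closed subgroup generated by $x_3,\ldots,x_d$. Then every defined $3$-fold Massey product in $H^\bullet(G,\mathbb{F}_p)$ vanishes if and only if $q\neq3$.
   Context: Commutators $[x,y]=x^{-1}y^{-1}xy$, $[y,{}_k x]$ left-normed; $H''$ is the closed commutator subgroup of $H'$. For $\psi_1,\ldots,\psi_m\in H^1(G,\mathbb{F}_p)=\mathrm{Hom}(G,\mathbb{F}_p)$, $\langle\psi_1,\ldots,\psi_m\rangle\subseteq H^2(G,\mathbb{F}_p)$ is the standard $m$-fold Massey product; it is defined if nonempty and vanishes if it contains $0$. Equivalently, with $\mathbb{U}_{m+1}$ the upper unitriangular $(m+1)\times(m+1)$ matrices over $\mathbb{F}_p$ and $Z$ its center: defined iff there is a continuous homomorphism $G\to\mathbb{U}_{m+1}/Z$ with $(i,i+1)$-entries $\psi_i$, and vanishing iff there is a continuous homomorphism $G\to\mathbb{U}_{m+1}$ with $(i,i+1)$-entries $\psi_i$. *)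

theory Defs
  imports "HOL-Algebra.Algebra" "HOL-Library.Extended_Nat"
begin

text \<open>Universe of carriers: all finite groups below have carriers inside the (infinite)
type mat of integer matrices indexed by nat; every finite group has an isomorphic copy there.\<close>

type_synonym mat = "nat \<Rightarrow> nat \<Rightarrow> int"

definition fin_p_group :: "nat \<Rightarrow> 'a monoid \<Rightarrow> bool" where
  "fin_p_group p P \<longleftrightarrow> group P \<and> finite (carrier P) \<and> (\<exists>k. card (carrier P) = p ^ k)"

text \<open>Elements of the free pro-p group on x_1..x_d, realised as implicit operations:
families of evaluations on all finite p-groups, natural w.r.t. homomorphisms.\<close>

type_synonym proword = "mat monoid \<Rightarrow> (nat \<Rightarrow> mat) \<Rightarrow> mat"

definition free_pro_p :: "nat \<Rightarrow> nat \<Rightarrow> proword set" where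
  "free_pro_p p d = {w.
     (\<forall>P g. fin_p_group p P \<and> g \<in> {1..d} \<rightarrow> carrier P \<longrightarrow> w P g \<in> carrier P) \<and>
     (\<forall>P g g'. fin_p_group p P \<and> g \<in> {1..d} \<rightarrow> carrier P \<and> (\<forall>i\<in>{1..d}. g i = g' i)
         \<longrightarrow> w P g = w P g') \<and>
     (\<forall>P Q h g. fin_p_group p P \<and> fin_p_group p Q \<and> h \<in> hom P Q \<and> g \<in> {1..d} \<rightarrow> carrier P
         \<longrightarrow> h (w P g) = w Q (h \<circ> g))}"

text \<open>s lies in S'' (S = closed subgroup generated by x_3..x_d) iff its image under every
homomorphism to a finite p-group lies in the second derived subgroup of the image of S.\<close>

definition S2 :: "nat \<Rightarrow> nat \<Rightarrow> proword set" where
  "S2 p d = {w \<in> free_pro_p p d. \<forall>P g. fin_p_group p P \<and> g \<in> {1..d} \<rightarrow> carrier P \<longrightarrow>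
       w P g \<in> derived P (derived P (generate P (g ` {3..d})))}"

definition comm :: "('a, 'b) monoid_scheme \<Rightarrow> 'a \<Rightarrow> 'a \<Rightarrow> 'a" where
  "comm P x y = inv\<^bsub>P\<^esub> x \<otimes>\<^bsub>P\<^esub> inv\<^bsub>P\<^esub> y \<otimes>\<^bsub>P\<^esub> x \<otimes>\<^bsub>P\<^esub> y"

fun itcomm :: "('a, 'b) monoid_scheme \<Rightarrow> 'a \<Rightarrow> 'a \<Rightarrow> nat \<Rightarrow> 'a" where
  "itcomm P y x 0 = y"
| "itcomm P y x (Suc k) = comm P (itcomm P y x k) x"

definition oprod :: "('a, 'b) monoid_scheme \<Rightarrow> 'a list \<Rightarrow> 'a" where
  "oprod P xs = foldr (\<lambda>a b. a \<otimes>\<^bsub>P\<^esub> b) xs \<one>\<^bsub>P\<^esub>"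

definition qexp :: "nat \<Rightarrow> enat \<Rightarrow> nat" where
  "qexp p f = (case f of enat k \<Rightarrow> p ^ k | \<infinity> \<Rightarrow> 0)"

definition relator :: "nat \<Rightarrow> nat \<Rightarrow> enat \<Rightarrow> nat \<Rightarrow> proword \<Rightarrow> mat monoid \<Rightarrow> (nat \<Rightarrow> mat) \<Rightarrow> mat" where
  "relator p d f n s P g =
     (g 1 [^]\<^bsub>P\<^esub> qexp p f) \<otimes>\<^bsub>P\<^esub> itcomm P (g 1) (g 2) n \<otimes>\<^bsub>P\<^esub> comm P (g 2) (g 3)
     \<otimes>\<^bsub>P\<^esub> oprod P (map (\<lambda>i. comm P (g (2*i)) (g (2*i+1))) [2..<(d+1) div 2])
     \<otimes>\<^bsub>P\<^esub> s P g"

text \<open>Continuous homomorphisms G = <x_1..x_d | r_0> \<rightarrow> P (P a finite p-group), given by the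
images g i of the generators x_i.\<close>
definition pres_hom :: "nat \<Rightarrow> nat \<Rightarrow> enat \<Rightarrow> nat \<Rightarrow> proword \<Rightarrow> mat monoid \<Rightarrow> (nat \<Rightarrow> mat) \<Rightarrow> bool" where
  "pres_hom p d f n s P g \<longleftrightarrow> g \<in> {1..d} \<rightarrow> carrier P \<and> relator p d f n s P g = \<one>\<^bsub>P\<^esub>"

text \<open>F_p (additive), element a encoded as the constant matrix a.\<close>
definition Fp_grp :: "nat \<Rightarrow> mat monoid" where
  "Fp_grp p = \<lparr>carrier = (\<lambda>a. \<lambda>_ _. a) ` {0..<int p},
               monoid.mult = (\<lambda>x y. \<lambda>_ _. (x 0 0 + y 0 0) mod int p),
               monoid.one = (\<lambda>_ _. 0)\<rparr>"

definition unitri4 :: "nat \<Rightarrow> mat set" where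
  "unitri4 p = {M. \<forall>i j. (i < 4 \<and> j < 4 \<longrightarrow>
        (if i = j then M i j = 1 else if j < i then M i j = 0 else M i j \<in> {0..<int p}))
      \<and> (\<not> (i < 4 \<and> j < 4) \<longrightarrow> M i j = 0)}"

definition matmul4 :: "nat \<Rightarrow> mat \<Rightarrow> mat \<Rightarrow> mat" where
  "matmul4 p M N = (\<lambda>i j. if i < 4 \<and> j < 4 then (\<Sum>k<4. M i k * N k j) mod int p else 0)"

definition id4 :: mat where
  "id4 = (\<lambda>i j. if i = j \<and> i < 4 then 1 else 0)"

definition U4 :: "nat \<Rightarrow> mat monoid" where
  "U4 p = \<lparr>carrier = unitri4 p, monoid.mult = matmul4 p, monoid.one = id4\<rparr>"

text \<open>U_4/Z, Z = centre = {I + c E_{14}}: each coset M Z is represented by its unique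
element with (1,4)-entry 0 (entry (0,3) here); multiplication of cosets.\<close>
definition U4Z :: "nat \<Rightarrow> mat monoid" where
  "U4Z p = \<lparr>carrier = {M \<in> unitri4 p. M 0 3 = 0},
            monoid.mult = (\<lambda>M N. (matmul4 p M N)(0 := (matmul4 p M N 0)(3 := 0))),
            monoid.one = id4\<rparr>"

text \<open>rho(x_j) has (i,i+1)-entry psi_i(x_j), i = 1,2,3 (0-indexed entry (i-1,i)).\<close>
definition entries_match :: "nat \<Rightarrow> (nat \<Rightarrow> nat \<Rightarrow> mat) \<Rightarrow> (nat \<Rightarrow> mat) \<Rightarrow> bool" where
  "entries_match d \<psi> g \<longleftrightarrow> (\<forall>j\<in>{1..d}. \<forall>i\<in>{1..3}. g j (i - 1) i = \<psi> i j 0 0)"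

end

theory Submission
  imports Defs
begin


definition mk :: "int \<Rightarrow> int \<Rightarrow> int \<Rightarrow> int \<Rightarrow> int \<Rightarrow> int \<Rightarrow> mat" where
  "mk a b c x y z = (\<lambda>i j. if i < 4 \<and> j < 4 then (if i = j then 1
     else if i = 0 \<and> j = 1 then a else if i = 1 \<and> j = 2 then b else if i = 2 \<and> j = 3 then c
     else if i = 0 \<and> j = 2 then x else if i = 1 \<and> j = 3 then y else if i = 0 \<and> j = 3 then z else 0) else 0)"

definition mkp :: "nat \<Rightarrow> int \<Rightarrow> int \<Rightarrow> int \<Rightarrow> int \<Rightarrow> int \<Rightarrow> int \<Rightarrow> mat" where
  "mkp p a b c x y z = mk (a mod p) (b mod p) (c mod p) (x mod p) (y mod p) (z mod p)"

lemma four_cases: "(i::nat) < 4 \<Longrightarrow> i = 0 \<or> i = 1 \<or> i = 2 \<or> i = 3" by auto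

lemma matmul_mk:
  assumes "p \<ge> 2"
  shows "matmul4 p (mk a b c x y z) (mk a2 b2 c2 x2 y2 z2) =
    mk ((a + a2) mod p) ((b + b2) mod p) ((c + c2) mod p) ((x + x2 + a * b2) mod p) ((y + y2 + b * c2) mod p) ((z + z2 + a * y2 + x * c2) mod p)"
proof (rule ext, rule ext)
  fix i j :: nat
  have p1: "1 mod int p = 1" using assms by simp
  show "matmul4 p (mk a b c x y z) (mk a2 b2 c2 x2 y2 z2) i j = mk ((a + a2) mod p) ((b + b2) mod p) ((c + c2) mod p) ((x + x2 + a * b2) mod p) ((y + y2 + b * c2) mod p) ((z + z2 + a * y2 + x * c2) mod p) i j"
  proof (cases "i < 4 \<and> j < 4")
    case True
    then have "i = 0 \<or> i = 1 \<or> i = 2 \<or> i = 3" "j = 0 \<or> j = 1 \<or> j = 2 \<or> j = 3" by auto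
    then show ?thesis unfolding matmul4_def mk_def
      by (elim disjE) (simp_all add: lessThan_nat_numeral p1 algebra_simps)
  next
    case False
    then show ?thesis unfolding matmul4_def mk_def by auto
  qed
qed




lemma mk_eq_iff: "mk a b c x y z = mk a2 b2 c2 x2 y2 z2 \<longleftrightarrow> a = a2 \<and> b = b2 \<and> c = c2 \<and> x = x2 \<and> y = y2 \<and> z = z2"
proof
  assume h: "mk a b c x y z = mk a2 b2 c2 x2 y2 z2"
  have "\<And>i j. mk a b c x y z i j = mk a2 b2 c2 x2 y2 z2 i j" using h by simp
  from this[of 0 1] this[of 1 2] this[of 2 3] this[of 0 2] this[of 1 3] this[of 0 3]
  show "a = a2 \<and> b = b2 \<and> c = c2 \<and> x = x2 \<and> y = y2 \<and> z = z2" unfolding mk_def by simp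
qed simp

lemma mkp_eq_iff: "mkp p a b c x y z = mkp p a2 b2 c2 x2 y2 z2 \<longleftrightarrow>
  a mod p = a2 mod p \<and> b mod p = b2 mod p \<and> c mod p = c2 mod p \<and> x mod p = x2 mod p \<and> y mod p = y2 mod p \<and> z mod p = z2 mod p"
  unfolding mkp_def mk_eq_iff by simp

lemma mcong_add: "(a::int) mod p = a2 mod p \<Longrightarrow> b mod p = b2 mod p \<Longrightarrow> (a + b) mod p = (a2 + b2) mod p"
  by (metis mod_add_eq)
lemma mcong_mult: "(a::int) mod p = a2 mod p \<Longrightarrow> b mod p = b2 mod p \<Longrightarrow> (a * b) mod p = (a2 * b2) mod p"
  by (metis mod_mult_eq)

lemma mkp_mod[simp]: fixes a b c x y z :: int shows "mkp p (a mod p) b c x y z = mkp p a b c x y z"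
  "mkp p a (b mod p) c x y z = mkp p a b c x y z"
  "mkp p a b (c mod p) x y z = mkp p a b c x y z"
  "mkp p a b c (x mod p) y z = mkp p a b c x y z"
  "mkp p a b c x (y mod p) z = mkp p a b c x y z"
  "mkp p a b c x y (z mod p) = mkp p a b c x y z"
  unfolding mkp_def by simp_all

lemma mkp_entries: "mkp p a b c x y z 0 1 = a mod p" "mkp p a b c x y z 1 2 = b mod p"
  "mkp p a b c x y z 2 3 = c mod p" "mkp p a b c x y z 0 2 = x mod p"
  "mkp p a b c x y z 1 3 = y mod p" "mkp p a b c x y z 0 3 = z mod p"
  unfolding mkp_def mk_def by simp_all

lemma U4_mult: "p \<ge> 2 \<Longrightarrow> mkp p a b c x y z \<otimes>\<^bsub>U4 p\<^esub> mkp p a2 b2 c2 x2 y2 z2 =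
   mkp p (a + a2) (b + b2) (c + c2) (x + x2 + a * b2) (y + y2 + b * c2) (z + z2 + a * y2 + x * c2)"
  unfolding U4_def mkp_def by (simp add: matmul_mk mk_eq_iff) (auto intro!: mcong_add mcong_mult)

lemma id4_mkp: "id4 = mkp p 0 0 0 0 0 0"
  unfolding id4_def mkp_def mk_def by (auto intro!: ext)

lemma U4_one: "\<one>\<^bsub>U4 p\<^esub> = mkp p 0 0 0 0 0 0"
  unfolding U4_def using id4_mkp by simp

lemma mkp_unitri: "p \<ge> 2 \<Longrightarrow> mkp p a b c x y z \<in> unitri4 p"
  unfolding unitri4_def mkp_def mk_def by auto

lemma unitri_mkp: assumes "M \<in> unitri4 p"
  shows "M = mkp p (M 0 1) (M 1 2) (M 2 3) (M 0 2) (M 1 3) (M 0 3)"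
proof (rule ext, rule ext)
  fix i j :: nat
  have h: "\<And>i j. (i < 4 \<and> j < 4 \<longrightarrow>
        (if i = j then M i j = 1 else if j < i then M i j = 0 else M i j \<in> {0..<int p}))
      \<and> (\<not> (i < 4 \<and> j < 4) \<longrightarrow> M i j = 0)" using assms unfolding unitri4_def by blast
  have r: "M 0 1 \<in> {0..<int p}" "M 1 2 \<in> {0..<int p}" "M 2 3 \<in> {0..<int p}" "M 0 2 \<in> {0..<int p}"
    "M 1 3 \<in> {0..<int p}" "M 0 3 \<in> {0..<int p}" using h[of 0 1] h[of 1 2] h[of 2 3] h[of 0 2] h[of 1 3] h[of 0 3] by auto
  show "M i j = mkp p (M 0 1) (M 1 2) (M 2 3) (M 0 2) (M 1 3) (M 0 3) i j"
  proof (cases "i < 4 \<and> j < 4")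
    case True
    then have "i = 0 \<or> i = 1 \<or> i = 2 \<or> i = 3" "j = 0 \<or> j = 1 \<or> j = 2 \<or> j = 3" by auto
    then show ?thesis unfolding mkp_def mk_def using r h[of i j]
      by (elim disjE) (simp_all)
  next
    case False
    then show ?thesis unfolding mkp_def mk_def using h[of i j] by auto
  qed
qed

lemma U4_carrier: "carrier (U4 p) = unitri4 p" unfolding U4_def by simp

lemma U4_carrierE: assumes "M \<in> carrier (U4 p)"
  obtains a b c x y z where "M = mkp p a b c x y z"
  using unitri_mkp[of M p] assms U4_carrier by blast

lemma U4_inv_ex: "p \<ge> 2 \<Longrightarrow> mkp p (- a) (- b) (- c) (a * b - x) (b * c - y) (- z + a * y + x * c - a * b * c)
   \<otimes>\<^bsub>U4 p\<^esub> mkp p a b c x y z = \<one>\<^bsub>U4 p\<^esub>"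
  by (simp add: U4_mult U4_one mkp_eq_iff algebra_simps)

lemma U4_group: assumes "p \<ge> 2" shows "group (U4 p)"
proof (rule groupI)
  fix M N assume "M \<in> carrier (U4 p)" "N \<in> carrier (U4 p)"
  then show "M \<otimes>\<^bsub>U4 p\<^esub> N \<in> carrier (U4 p)"
    by (metis U4_carrierE U4_mult U4_carrier mkp_unitri assms)
next
  show "\<one>\<^bsub>U4 p\<^esub> \<in> carrier (U4 p)" using U4_one U4_carrier mkp_unitri assms by metis
next
  fix M N L assume "M \<in> carrier (U4 p)" "N \<in> carrier (U4 p)" "L \<in> carrier (U4 p)"
  then obtain a b c x y z a2 b2 c2 x2 y2 z2 a3 b3 c3 x3 y3 z3 where
    "M = mkp p a b c x y z" "N = mkp p a2 b2 c2 x2 y2 z2" "L = mkp p a3 b3 c3 x3 y3 z3"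
    by (metis U4_carrierE)
  then show "M \<otimes>\<^bsub>U4 p\<^esub> N \<otimes>\<^bsub>U4 p\<^esub> L = M \<otimes>\<^bsub>U4 p\<^esub> (N \<otimes>\<^bsub>U4 p\<^esub> L)"
    using assms by (simp add: U4_mult mkp_eq_iff algebra_simps)
next
  fix M assume "M \<in> carrier (U4 p)"
  then obtain a b c x y z where "M = mkp p a b c x y z" by (metis U4_carrierE)
  then show "\<one>\<^bsub>U4 p\<^esub> \<otimes>\<^bsub>U4 p\<^esub> M = M" using assms by (simp add: U4_mult U4_one)
next
  fix M assume "M \<in> carrier (U4 p)"
  then obtain a b c x y z where "M = mkp p a b c x y z" by (metis U4_carrierE)
  then show "\<exists>y\<in>carrier (U4 p). y \<otimes>\<^bsub>U4 p\<^esub> M = \<one>\<^bsub>U4 p\<^esub>"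
    using assms U4_inv_ex mkp_unitri U4_carrier by metis
qed

lemma U4_inv: assumes "p \<ge> 2"
  shows "inv\<^bsub>U4 p\<^esub> (mkp p a b c x y z) = mkp p (- a) (- b) (- c) (a * b - x) (b * c - y) (- z + a * y + x * c - a * b * c)"
proof -
  interpret group "U4 p" using U4_group assms .
  show ?thesis using inv_equality[OF U4_inv_ex[OF assms]] mkp_unitri assms U4_carrier by metis
qed




definition pr :: "mat \<Rightarrow> mat" where "pr M = M(0 := (M 0)(3 := 0))"

lemma pr_mkp: "pr (mkp p a b c x y z) = mkp p a b c x y 0"
  unfolding pr_def mkp_def mk_def by (auto intro!: ext)

lemma matmul4_mkp: "p \<ge> 2 \<Longrightarrow> matmul4 p (mkp p a b c x y z) (mkp p a2 b2 c2 x2 y2 z2) =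
   mkp p (a + a2) (b + b2) (c + c2) (x + x2 + a * b2) (y + y2 + b * c2) (z + z2 + a * y2 + x * c2)"
  using U4_mult[of p] unfolding U4_def by simp

lemma U4Z_mult: "p \<ge> 2 \<Longrightarrow> mkp p a b c x y z \<otimes>\<^bsub>U4Z p\<^esub> mkp p a2 b2 c2 x2 y2 z2 =
   mkp p (a + a2) (b + b2) (c + c2) (x + x2 + a * b2) (y + y2 + b * c2) 0"
  unfolding U4Z_def using matmul4_mkp pr_mkp unfolding pr_def by simp

lemma U4Z_one: "\<one>\<^bsub>U4Z p\<^esub> = mkp p 0 0 0 0 0 0"
  unfolding U4Z_def using id4_mkp by simp

lemma U4Z_carrier: "carrier (U4Z p) = {M \<in> unitri4 p. M 0 3 = 0}" unfolding U4Z_def by simp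

lemma mkp_U4Z: "p \<ge> 2 \<Longrightarrow> mkp p a b c x y 0 \<in> carrier (U4Z p)"
  using mkp_unitri[of p] mkp_entries U4Z_carrier by auto

lemma U4Z_carrierE: assumes "M \<in> carrier (U4Z p)"
  obtains a b c x y where "M = mkp p a b c x y 0"
  using unitri_mkp[of M p] assms U4Z_carrier by force

lemma U4Z_sub: "carrier (U4Z p) \<subseteq> carrier (U4 p)" using U4Z_carrier U4_carrier by auto

lemma U4Z_inv_ex: "p \<ge> 2 \<Longrightarrow> mkp p (- a) (- b) (- c) (a * b - x) (b * c - y) 0
   \<otimes>\<^bsub>U4Z p\<^esub> mkp p a b c x y z = \<one>\<^bsub>U4Z p\<^esub>"
  by (simp add: U4Z_mult U4Z_one mkp_eq_iff algebra_simps)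

lemma U4Z_group: assumes "p \<ge> 2" shows "group (U4Z p)"
proof (rule groupI)
  fix M N assume "M \<in> carrier (U4Z p)" "N \<in> carrier (U4Z p)"
  then show "M \<otimes>\<^bsub>U4Z p\<^esub> N \<in> carrier (U4Z p)"
    by (metis U4Z_carrierE U4Z_mult mkp_U4Z assms)
next
  show "\<one>\<^bsub>U4Z p\<^esub> \<in> carrier (U4Z p)" using U4Z_one mkp_U4Z assms by metis
next
  fix M N L assume "M \<in> carrier (U4Z p)" "N \<in> carrier (U4Z p)" "L \<in> carrier (U4Z p)"
  then obtain a b c x y a2 b2 c2 x2 y2 a3 b3 c3 x3 y3 where
    "M = mkp p a b c x y 0" "N = mkp p a2 b2 c2 x2 y2 0" "L = mkp p a3 b3 c3 x3 y3 0"
    by (metis U4Z_carrierE)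
  then show "M \<otimes>\<^bsub>U4Z p\<^esub> N \<otimes>\<^bsub>U4Z p\<^esub> L = M \<otimes>\<^bsub>U4Z p\<^esub> (N \<otimes>\<^bsub>U4Z p\<^esub> L)"
    using assms by (simp add: U4Z_mult mkp_eq_iff algebra_simps)
next
  fix M assume "M \<in> carrier (U4Z p)"
  then obtain a b c x y where "M = mkp p a b c x y 0" by (metis U4Z_carrierE)
  then show "\<one>\<^bsub>U4Z p\<^esub> \<otimes>\<^bsub>U4Z p\<^esub> M = M" using assms by (simp add: U4Z_mult U4Z_one)
next
  fix M assume "M \<in> carrier (U4Z p)"
  then obtain a b c x y where "M = mkp p a b c x y 0" by (metis U4Z_carrierE)
  then show "\<exists>y\<in>carrier (U4Z p). y \<otimes>\<^bsub>U4Z p\<^esub> M = \<one>\<^bsub>U4Z p\<^esub>"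
    using assms U4Z_inv_ex mkp_U4Z by metis
qed

lemma pr_hom: assumes "p \<ge> 2" shows "pr \<in> hom (U4 p) (U4Z p)"
proof (rule homI)
  fix M assume "M \<in> carrier (U4 p)"
  then show "pr M \<in> carrier (U4Z p)" by (metis U4_carrierE pr_mkp mkp_U4Z assms)
next
  fix M N assume "M \<in> carrier (U4 p)" "N \<in> carrier (U4 p)"
  then obtain a b c x y z a2 b2 c2 x2 y2 z2 where
    "M = mkp p a b c x y z" "N = mkp p a2 b2 c2 x2 y2 z2" by (metis U4_carrierE)
  then show "pr (M \<otimes>\<^bsub>U4 p\<^esub> N) = pr M \<otimes>\<^bsub>U4Z p\<^esub> pr N"
    using assms by (simp add: U4_mult U4Z_mult pr_mkp)
qed

definition cst :: "int \<Rightarrow> mat" where "cst a = (\<lambda>_ _. a)"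

lemma cst_eq: "cst a = cst b \<longleftrightarrow> a = b" unfolding cst_def by (metis)

lemma Fp_mult: "cst a \<otimes>\<^bsub>Fp_grp p\<^esub> cst b = cst ((a + b) mod p)"
  unfolding Fp_grp_def cst_def by simp

lemma Fp_one: "\<one>\<^bsub>Fp_grp p\<^esub> = cst 0" unfolding Fp_grp_def cst_def by simp

lemma Fp_carrier: "carrier (Fp_grp p) = cst ` {0..<int p}" unfolding Fp_grp_def cst_def by simp

lemma Fp_group: assumes "p \<ge> 2" shows "group (Fp_grp p)"
proof (rule groupI)
  fix M N assume "M \<in> carrier (Fp_grp p)" "N \<in> carrier (Fp_grp p)"
  then show "M \<otimes>\<^bsub>Fp_grp p\<^esub> N \<in> carrier (Fp_grp p)"
    using assms by (auto simp: Fp_carrier Fp_mult)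
next
  show "\<one>\<^bsub>Fp_grp p\<^esub> \<in> carrier (Fp_grp p)" using assms by (auto simp: Fp_carrier Fp_one)
next
  fix M N L assume "M \<in> carrier (Fp_grp p)" "N \<in> carrier (Fp_grp p)" "L \<in> carrier (Fp_grp p)"
  then show "M \<otimes>\<^bsub>Fp_grp p\<^esub> N \<otimes>\<^bsub>Fp_grp p\<^esub> L = M \<otimes>\<^bsub>Fp_grp p\<^esub> (N \<otimes>\<^bsub>Fp_grp p\<^esub> L)"
    by (auto simp: Fp_carrier Fp_mult mod_simps algebra_simps)
next
  fix M assume "M \<in> carrier (Fp_grp p)"
  then show "\<one>\<^bsub>Fp_grp p\<^esub> \<otimes>\<^bsub>Fp_grp p\<^esub> M = M" by (auto simp: Fp_carrier Fp_mult Fp_one)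
next
  fix M assume "M \<in> carrier (Fp_grp p)"
  then obtain a where a: "M = cst a" "a \<in> {0..<int p}" by (auto simp: Fp_carrier)
  then have "cst ((- a) mod p) \<in> carrier (Fp_grp p)" "cst ((- a) mod p) \<otimes>\<^bsub>Fp_grp p\<^esub> M = \<one>\<^bsub>Fp_grp p\<^esub>"
    using assms by (auto simp: Fp_carrier Fp_mult Fp_one mod_simps)
  then show "\<exists>y\<in>carrier (Fp_grp p). y \<otimes>\<^bsub>Fp_grp p\<^esub> M = \<one>\<^bsub>Fp_grp p\<^esub>" by blast
qed

definition pj :: "nat \<Rightarrow> mat \<Rightarrow> mat" where "pj k M = cst (M k (Suc k))"

lemma pj_mkp: "pj 0 (mkp p a b c x y z) = cst (a mod p)" "pj 1 (mkp p a b c x y z) = cst (b mod p)"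
  "pj 2 (mkp p a b c x y z) = cst (c mod p)" "pj (Suc 0) (mkp p a b c x y z) = cst (b mod p)"
  unfolding pj_def mkp_def mk_def by simp_all

lemma pj_hom: assumes "p \<ge> 2" "k \<in> {0,1,2}" shows "pj k \<in> hom (U4 p) (Fp_grp p)"
proof (rule homI)
  fix M assume "M \<in> carrier (U4 p)"
  then obtain a b c x y z where "M = mkp p a b c x y z" by (metis U4_carrierE)
  then show "pj k M \<in> carrier (Fp_grp p)" using assms by (auto simp: pj_mkp Fp_carrier)
next
  fix M N assume "M \<in> carrier (U4 p)" "N \<in> carrier (U4 p)"
  then obtain a b c x y z a2 b2 c2 x2 y2 z2 where
    "M = mkp p a b c x y z" "N = mkp p a2 b2 c2 x2 y2 z2" by (metis U4_carrierE)
  then show "pj k (M \<otimes>\<^bsub>U4 p\<^esub> N) = pj k M \<otimes>\<^bsub>Fp_grp p\<^esub> pj k N"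
    using assms by (auto simp: U4_mult pj_mkp Fp_mult mod_simps)
qed




lemma unitri_range: assumes "M \<in> unitri4 p"
  shows "M 0 1 \<in> {0..<int p}" "M 1 2 \<in> {0..<int p}" "M 2 3 \<in> {0..<int p}" "M 0 2 \<in> {0..<int p}"
    "M 1 3 \<in> {0..<int p}" "M 0 3 \<in> {0..<int p}"
proof -
  have h: "\<And>i j. (i < 4 \<and> j < 4 \<longrightarrow>
        (if i = j then M i j = 1 else if j < i then M i j = 0 else M i j \<in> {0..<int p}))"
    using assms unfolding unitri4_def by blast
  show "M 0 1 \<in> {0..<int p}" "M 1 2 \<in> {0..<int p}" "M 2 3 \<in> {0..<int p}" "M 0 2 \<in> {0..<int p}"
    "M 1 3 \<in> {0..<int p}" "M 0 3 \<in> {0..<int p}"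
    using h[of 0 1] h[of 1 2] h[of 2 3] h[of 0 2] h[of 1 3] h[of 0 3] by auto
qed

lemma mkp_range: "a \<in> {0..<int p} \<Longrightarrow> b \<in> {0..<int p} \<Longrightarrow> c \<in> {0..<int p} \<Longrightarrow> x \<in> {0..<int p} \<Longrightarrow>
   y \<in> {0..<int p} \<Longrightarrow> z \<in> {0..<int p} \<Longrightarrow> mkp p a b c x y z = mk a b c x y z"
  unfolding mkp_def by simp

lemma U4_card_eq: assumes "p \<ge> 2"
  shows "carrier (U4 p) = (\<lambda>(a,b,c,x,y,z). mk a b c x y z) ` ({0..<int p} \<times> {0..<int p} \<times> {0..<int p} \<times> {0..<int p} \<times> {0..<int p} \<times> {0..<int p})" (is "?L = ?R")
proof
  show "?L \<subseteq> ?R"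
  proof
    fix M assume "M \<in> carrier (U4 p)"
    then have M: "M \<in> unitri4 p" by (simp add: U4_carrier)
    note r = unitri_range[OF M]
    have "M = mk (M 0 1) (M 1 2) (M 2 3) (M 0 2) (M 1 3) (M 0 3)"
      using unitri_mkp[OF M] mkp_range[OF r] by simp
    then show "M \<in> ?R" using r
      by (intro rev_image_eqI[of "(M 0 1, M 1 2, M 2 3, M 0 2, M 1 3, M 0 3)"]) auto
  qed
next
  show "?R \<subseteq> ?L"
  proof
    fix M assume "M \<in> ?R"
    then obtain a b c x y z where "M = mk a b c x y z" "a \<in> {0..<int p}" "b \<in> {0..<int p}" "c \<in> {0..<int p}"
      "x \<in> {0..<int p}" "y \<in> {0..<int p}" "z \<in> {0..<int p}" by auto
    then show "M \<in> ?L" using mkp_unitri[OF assms, of a b c x y z] mkp_range[of a p b c x y z] U4_carrier by simp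
  qed
qed

lemma card_I: "card {0..<int p} = p" by simp

lemma fin_U4: assumes "p \<ge> 2" shows "fin_p_group p (U4 p)"
proof -
  let ?I = "{0..<int p}"
  have inj: "inj_on (\<lambda>(a,b,c,x,y,z). mk a b c x y z) (?I \<times> ?I \<times> ?I \<times> ?I \<times> ?I \<times> ?I)"
    by (auto simp: inj_on_def mk_eq_iff)
  have "card (carrier (U4 p)) = card (?I \<times> ?I \<times> ?I \<times> ?I \<times> ?I \<times> ?I)"
    unfolding U4_card_eq[OF assms] using card_image[OF inj] .
  also have "\<dots> = p ^ 6" by (simp add: card_cartesian_product eval_nat_numeral)
  finally show ?thesis unfolding fin_p_group_def using U4_group[OF assms] U4_card_eq[OF assms] by auto
qed

lemma U4Z_card_eq: assumes "p \<ge> 2"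
  shows "carrier (U4Z p) = (\<lambda>(a,b,c,x,y). mk a b c x y 0) ` ({0..<int p} \<times> {0..<int p} \<times> {0..<int p} \<times> {0..<int p} \<times> {0..<int p})" (is "?L = ?R")
proof
  show "?L \<subseteq> ?R"
  proof
    fix M assume "M \<in> carrier (U4Z p)"
    then have M: "M \<in> unitri4 p" "M 0 3 = 0" by (auto simp add: U4Z_carrier)
    note r = unitri_range[OF M(1)]
    have "M = mk (M 0 1) (M 1 2) (M 2 3) (M 0 2) (M 1 3) 0"
      using unitri_mkp[OF M(1)] mkp_range[OF r] M(2) by simp
    then show "M \<in> ?R" using r
      by (intro rev_image_eqI[of "(M 0 1, M 1 2, M 2 3, M 0 2, M 1 3)"]) auto
  qed
next
  show "?R \<subseteq> ?L"
  proof
    fix M assume "M \<in> ?R"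
    then obtain a b c x y where "M = mk a b c x y 0" "a \<in> {0..<int p}" "b \<in> {0..<int p}" "c \<in> {0..<int p}"
      "x \<in> {0..<int p}" "y \<in> {0..<int p}" by auto
    then show "M \<in> ?L" using mkp_U4Z[OF assms, of a b c x y] mkp_range[of a p b c x y 0] assms by simp
  qed
qed

lemma fin_U4Z: assumes "p \<ge> 2" shows "fin_p_group p (U4Z p)"
proof -
  let ?I = "{0..<int p}"
  have inj: "inj_on (\<lambda>(a,b,c,x,y). mk a b c x y 0) (?I \<times> ?I \<times> ?I \<times> ?I \<times> ?I)"
    by (auto simp: inj_on_def mk_eq_iff)
  have "card (carrier (U4Z p)) = card (?I \<times> ?I \<times> ?I \<times> ?I \<times> ?I)"
    unfolding U4Z_card_eq[OF assms] using card_image[OF inj] .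
  also have "\<dots> = p ^ 5" by (simp add: card_cartesian_product eval_nat_numeral)
  finally show ?thesis unfolding fin_p_group_def using U4Z_group[OF assms] U4Z_card_eq[OF assms] by auto
qed

lemma fin_Fp: assumes "p \<ge> 2" shows "fin_p_group p (Fp_grp p)"
proof -
  have inj: "inj_on cst {0..<int p}" by (auto simp: inj_on_def cst_eq)
  have "card (carrier (Fp_grp p)) = p ^ 1" unfolding Fp_carrier using card_image[OF inj] by simp
  then show ?thesis unfolding fin_p_group_def using Fp_group[OF assms] Fp_carrier by (metis finite_atLeastLessThan_int finite_imageI)
qed

lemma U4_comm: "p \<ge> 2 \<Longrightarrow> comm (U4 p) (mkp p a b c x y z) (mkp p a2 b2 c2 x2 y2 z2) =
  mkp p 0 0 0 (a * b2 - a2 * b) (b * c2 - b2 * c)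
   (a * y2 + x * c2 - a2 * y - x2 * c - (a + a2) * (b * c2 - b2 * c))"
  unfolding comm_def by (simp add: U4_inv U4_mult mkp_eq_iff) (simp add: algebra_simps)

lemma U4_pow: "p \<ge> 2 \<Longrightarrow> mkp p a b c x y z [^]\<^bsub>U4 p\<^esub> (k::nat) =
  mkp p (int k * a) (int k * b) (int k * c) (int k * x + int (k choose 2) * a * b) (int k * y + int (k choose 2) * b * c)
   (int k * z + int (k choose 2) * (a * y + x * c) + int (k choose 3) * a * b * c)"
proof (induction k)
  case 0
  then show ?case by (simp add: U4_one mkp_eq_iff binomial_eq_0)
next
  case (Suc k)
  have e2: "Suc k choose 2 = (k choose 2) + k" by (simp add: numeral_2_eq_2)
  have e3: "Suc k choose 3 = (k choose 3) + (k choose 2)" by (simp add: numeral_3_eq_3 numeral_2_eq_2)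
  show ?case using Suc by (simp add: U4_mult e2 e3 mkp_eq_iff) (simp add: algebra_simps)
qed

lemma mkp_entries_S: "mkp p a b c x y z 0 (Suc 0) = a mod p" "mkp p a b c x y z (Suc 0) 2 = b mod p"
  "mkp p a b c x y z (Suc 0) 3 = y mod p"
  unfolding mkp_def mk_def by simp_all

definition Kset :: "nat \<Rightarrow> mat set" where
  "Kset p = {M \<in> unitri4 p. M 0 1 = 0 \<and> M 1 2 = 0 \<and> M 2 3 = 0}"

lemma Kset_E: assumes "M \<in> Kset p" obtains x y z where "M = mkp p 0 0 0 x y z"
  using assms unitri_mkp[of M p] unfolding Kset_def by force

lemma mkp_Kset: "p \<ge> 2 \<Longrightarrow> mkp p 0 0 0 x y z \<in> Kset p"
  unfolding Kset_def using mkp_unitri mkp_entries by auto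

lemma Kset_sub: assumes "p \<ge> 2" shows "subgroup (Kset p) (U4 p)"
proof (rule group.subgroupI[OF U4_group[OF assms]])
  show "Kset p \<subseteq> carrier (U4 p)" unfolding Kset_def U4_carrier by auto
  show "Kset p \<noteq> {}" using mkp_Kset[OF assms] by blast
  fix M assume "M \<in> Kset p"
  then obtain x y z where "M = mkp p 0 0 0 x y z" by (rule Kset_E)
  then show "inv\<^bsub>U4 p\<^esub> M \<in> Kset p" using assms by (simp add: U4_inv mkp_Kset)
next
  fix M N assume "M \<in> Kset p" "N \<in> Kset p"
  then obtain x y z x2 y2 z2 where "M = mkp p 0 0 0 x y z" "N = mkp p 0 0 0 x2 y2 z2" by (metis Kset_E)
  then show "M \<otimes>\<^bsub>U4 p\<^esub> N \<in> Kset p" using assms by (simp add: U4_mult mkp_Kset)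
qed

lemma U4_derived2: assumes "p \<ge> 2" "H \<subseteq> carrier (U4 p)"
  shows "derived (U4 p) (derived (U4 p) H) \<subseteq> {\<one>\<^bsub>U4 p\<^esub>}"
proof -
  interpret group "U4 p" using U4_group assms(1) .
  have "derived_set (U4 p) H \<subseteq> Kset p"
  proof
    fix M assume "M \<in> derived_set (U4 p) H"
    then obtain A B where AB: "A \<in> carrier (U4 p)" "B \<in> carrier (U4 p)"
      "M = A \<otimes>\<^bsub>U4 p\<^esub> B \<otimes>\<^bsub>U4 p\<^esub> inv\<^bsub>U4 p\<^esub> A \<otimes>\<^bsub>U4 p\<^esub> inv\<^bsub>U4 p\<^esub> B" using assms(2) by blast
    obtain a b c x y z where A: "A = mkp p a b c x y z" using AB(1) by (rule U4_carrierE)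
    obtain a2 b2 c2 x2 y2 z2 where B: "B = mkp p a2 b2 c2 x2 y2 z2" using AB(2) by (rule U4_carrierE)
    have "M \<in> unitri4 p" using AB by (simp add: U4_carrier[symmetric])
    moreover have "M 0 1 = 0 \<and> M 1 2 = 0 \<and> M 2 3 = 0"
      using assms(1) unfolding AB(3) A B by (simp add: U4_inv U4_mult mkp_entries mkp_entries_S)
    ultimately show "M \<in> Kset p" unfolding Kset_def by blast
  qed
  then have D: "derived (U4 p) H \<subseteq> Kset p"
    unfolding derived_def using generate_subgroup_incl Kset_sub assms(1) by blast
  have "derived_set (U4 p) (derived (U4 p) H) \<subseteq> {\<one>\<^bsub>U4 p\<^esub>}"
  proof
    fix M assume "M \<in> derived_set (U4 p) (derived (U4 p) H)"
    then obtain A B where AB: "A \<in> Kset p" "B \<in> Kset p"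
      "M = A \<otimes>\<^bsub>U4 p\<^esub> B \<otimes>\<^bsub>U4 p\<^esub> inv\<^bsub>U4 p\<^esub> A \<otimes>\<^bsub>U4 p\<^esub> inv\<^bsub>U4 p\<^esub> B" using D by blast
    obtain x y z where A: "A = mkp p 0 0 0 x y z" using AB(1) by (rule Kset_E)
    obtain x2 y2 z2 where B: "B = mkp p 0 0 0 x2 y2 z2" using AB(2) by (rule Kset_E)
    show "M \<in> {\<one>\<^bsub>U4 p\<^esub>}" using assms(1) unfolding AB(3) A B
      by (simp add: U4_inv U4_mult U4_one mkp_eq_iff)
  qed
  then show ?thesis unfolding derived_def[of _ "derived (U4 p) H"]
    using generate_subgroup_incl triv_subgroup by blast
qed




lemma oprod_Nil[simp]: "oprod P [] = \<one>\<^bsub>P\<^esub>" unfolding oprod_def by simp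
lemma oprod_Cons[simp]: "oprod P (x # xs) = x \<otimes>\<^bsub>P\<^esub> oprod P xs" unfolding oprod_def by simp

lemma comm_closed: "group P \<Longrightarrow> x \<in> carrier P \<Longrightarrow> y \<in> carrier P \<Longrightarrow> comm P x y \<in> carrier P"
  unfolding comm_def by (simp add: group.inv_closed monoid.m_closed group.is_monoid)

lemma itcomm_closed: "group P \<Longrightarrow> x \<in> carrier P \<Longrightarrow> y \<in> carrier P \<Longrightarrow> itcomm P x y k \<in> carrier P"
  by (induction k) (simp_all add: comm_closed)

lemma oprod_closed: "group P \<Longrightarrow> set xs \<subseteq> carrier P \<Longrightarrow> oprod P xs \<in> carrier P"
  by (induction xs) (simp_all add: monoid.m_closed group.is_monoid)

lemma comm_hom: assumes "group_hom P Q h" "x \<in> carrier P" "y \<in> carrier P"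
  shows "h (comm P x y) = comm Q (h x) (h y)"
proof -
  interpret group_hom P Q h by fact
  show ?thesis using assms(2,3) unfolding comm_def by simp
qed

lemma itcomm_hom: assumes "group_hom P Q h" "x \<in> carrier P" "y \<in> carrier P"
  shows "h (itcomm P x y k) = itcomm Q (h x) (h y) k"
proof (induction k)
  case 0 then show ?case by simp
next
  case (Suc k)
  interpret group_hom P Q h by fact
  show ?case using Suc assms by (simp add: comm_hom itcomm_closed)
qed

lemma oprod_hom: assumes "group_hom P Q h" "set xs \<subseteq> carrier P"
  shows "h (oprod P xs) = oprod Q (map h xs)"
  using assms(2)
proof (induction xs)
  case Nil
  interpret group_hom P Q h by fact
  show ?case by simp
next
  case (Cons x xs)
  interpret group_hom P Q h by fact
  show ?case using Cons by (simp add: oprod_closed)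
qed

lemma pair_le: "i \<in> set [2..<(d + 1) div 2] \<Longrightarrow> 2 * i \<in> {1..d} \<and> 2 * i + 1 \<in> {1..d}"
  by auto

lemma relator_hom:
  assumes P: "fin_p_group p P" and Q: "fin_p_group p Q" and h: "h \<in> hom P Q"
    and g: "g \<in> {1..d} \<rightarrow> carrier P" and s: "s \<in> free_pro_p p d" and d: "d \<ge> 3"
  shows "h (relator p d f n s P g) = relator p d f n s Q (h \<circ> g)"
proof -
  have gP: "group P" and gQ: "group Q" using P Q unfolding fin_p_group_def by auto
  interpret group_hom P Q h using gP gQ h by (simp add: group_hom_def group_hom_axioms_def)
  have g123: "g 1 \<in> carrier P" "g 2 \<in> carrier P" "g 3 \<in> carrier P" using g d by auto
  have gi: "\<And>i. i \<in> set [2..<(d + 1) div 2] \<Longrightarrow> g (2 * i) \<in> carrier P \<and> g (2 * i + 1) \<in> carrier P"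
    using g pair_le by blast
  have sP: "s P g \<in> carrier P" and sh: "h (s P g) = s Q (h \<circ> g)"
    using s P Q h g unfolding free_pro_p_def by blast+
  let ?L = "map (\<lambda>i. comm P (g (2 * i)) (g (2 * i + 1))) [2..<(d + 1) div 2]"
  have Lc: "set ?L \<subseteq> carrier P" using gi comm_closed[OF gP] by auto
  have Lh: "map h ?L = map (\<lambda>i. comm Q ((h \<circ> g) (2 * i)) ((h \<circ> g) (2 * i + 1))) [2..<(d + 1) div 2]"
    using gi by (simp add: comm_hom[OF group_hom_axioms])
  have O: "h (oprod P ?L) = oprod Q (map (\<lambda>i. comm Q ((h \<circ> g) (2 * i)) ((h \<circ> g) (2 * i + 1))) [2..<(d + 1) div 2])"
    unfolding oprod_hom[OF group_hom_axioms Lc] Lh ..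
  show ?thesis unfolding relator_def
    using g123 sP sh Lc O
    by (simp add: comm_hom[OF group_hom_axioms] itcomm_hom[OF group_hom_axioms] oprod_hom[OF group_hom_axioms]
        hom_nat_pow comm_closed[OF gP] itcomm_closed[OF gP] oprod_closed[OF gP])
qed

lemma relator_cong:
  assumes P: "fin_p_group p P" and g: "g \<in> {1..d} \<rightarrow> carrier P" and e: "\<forall>i\<in>{1..d}. g i = g' i"
    and s: "s \<in> free_pro_p p d" and d: "d \<ge> 3"
  shows "relator p d f n s P g = relator p d f n s P g'"
proof -
  have "s P g = s P g'" using s P g e unfolding free_pro_p_def by blast
  moreover have "g 1 = g' 1" "g 2 = g' 2" "g 3 = g' 3" using e d by auto
  moreover have "map (\<lambda>i. comm P (g (2 * i)) (g (2 * i + 1))) [2..<(d + 1) div 2] =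
      map (\<lambda>i. comm P (g' (2 * i)) (g' (2 * i + 1))) [2..<(d + 1) div 2]"
    using e pair_le by (intro map_cong) auto
  then have "oprod P (map (\<lambda>i. comm P (g (2 * i)) (g (2 * i + 1))) [2..<(d + 1) div 2]) =
      oprod P (map (\<lambda>i. comm P (g' (2 * i)) (g' (2 * i + 1))) [2..<(d + 1) div 2])" by (rule arg_cong)
  ultimately show ?thesis unfolding relator_def by simp
qed




definition cxx :: "mat \<Rightarrow> mat \<Rightarrow> int" where "cxx A B = A 0 1 * B 1 2 - B 0 1 * A 1 2"
definition cyy :: "mat \<Rightarrow> mat \<Rightarrow> int" where "cyy A B = A 1 2 * B 2 3 - B 1 2 * A 2 3"
definition czz :: "mat \<Rightarrow> mat \<Rightarrow> int" where
  "czz A B = A 0 1 * B 1 3 + A 0 2 * B 2 3 - B 0 1 * A 1 3 - B 0 2 * A 2 3 - (A 0 1 + B 0 1) * (A 1 2 * B 2 3 - B 1 2 * A 2 3)"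

lemma U4_carrier_mkp: "M \<in> carrier (U4 p) \<Longrightarrow> M = mkp p (M 0 1) (M 1 2) (M 2 3) (M 0 2) (M 1 3) (M 0 3)"
  using unitri_mkp U4_carrier by metis

lemma mkp_U4: "p \<ge> 2 \<Longrightarrow> mkp p a b c x y z \<in> carrier (U4 p)"
  using mkp_unitri U4_carrier by metis

lemma U4_comm_gen: assumes "p \<ge> 2" "A \<in> carrier (U4 p)" "B \<in> carrier (U4 p)"
  shows "comm (U4 p) A B = mkp p 0 0 0 (cxx A B) (cyy A B) (czz A B)"
proof -
  have "comm (U4 p) A B = comm (U4 p) (mkp p (A 0 1) (A 1 2) (A 2 3) (A 0 2) (A 1 3) (A 0 3))
      (mkp p (B 0 1) (B 1 2) (B 2 3) (B 0 2) (B 1 3) (B 0 3))"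
    using U4_carrier_mkp[OF assms(2)] U4_carrier_mkp[OF assms(3)] by (rule arg_cong2)
  also have "\<dots> = mkp p 0 0 0 (cxx A B) (cyy A B) (czz A B)"
    unfolding U4_comm[OF assms(1)] cxx_def cyy_def czz_def by (simp add: mkp_eq_iff algebra_simps)
  finally show ?thesis .
qed

lemma comm_K: assumes "p \<ge> 2" "B \<in> carrier (U4 p)"
  shows "comm (U4 p) (mkp p 0 0 0 u1 u2 u3) B = mkp p 0 0 0 0 0 (u1 * B 2 3 - B 0 1 * u2)"
proof -
  have "comm (U4 p) (mkp p 0 0 0 u1 u2 u3) B = comm (U4 p) (mkp p 0 0 0 u1 u2 u3)
      (mkp p (B 0 1) (B 1 2) (B 2 3) (B 0 2) (B 1 3) (B 0 3))"
    using U4_carrier_mkp[OF assms(2)] by simp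
  also have "\<dots> = mkp p 0 0 0 0 0 (u1 * B 2 3 - B 0 1 * u2)"
    unfolding U4_comm[OF assms(1)] by (simp add: mkp_eq_iff algebra_simps)
  finally show ?thesis .
qed

lemma U4_itcomm: assumes "p \<ge> 2" "A \<in> carrier (U4 p)" "B \<in> carrier (U4 p)" "k \<ge> 2"
  shows "itcomm (U4 p) A B k = mkp p 0 0 0 0 0 (if k = 2 then cxx A B * B 2 3 - B 0 1 * cyy A B else 0)"
  using assms(4)
proof (induction k rule: dec_induct)
  case base
  show ?case using assms by (simp add: numeral_2_eq_2 U4_comm_gen comm_K)
next
  case (step k)
  then show ?case using assms by (simp add: comm_K)
qed

lemma oprod_K: assumes "p \<ge> 2"
  shows "oprod (U4 p) (map (\<lambda>i. mkp p 0 0 0 (fx i) (fy i) (fz i)) L) =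
    mkp p 0 0 0 (\<Sum>i\<leftarrow>L. fx i) (\<Sum>i\<leftarrow>L. fy i) (\<Sum>i\<leftarrow>L. fz i)"
proof (induction L)
  case Nil then show ?case by (simp add: U4_one)
next
  case (Cons a L) then show ?case using assms by (simp add: U4_mult)
qed

lemma U4_s_one: assumes p2: "p \<ge> 2" and s: "s \<in> S2 p d" and h: "h \<in> {1..d} \<rightarrow> carrier (U4 p)"
  shows "s (U4 p) h = \<one>\<^bsub>U4 p\<^esub>"
proof -
  interpret group "U4 p" using U4_group[OF p2] .
  have "s (U4 p) h \<in> derived (U4 p) (derived (U4 p) (generate (U4 p) (h ` {3..d})))"
    using s fin_U4[OF p2] h unfolding S2_def by blast
  moreover have "generate (U4 p) (h ` {3..d}) \<subseteq> carrier (U4 p)"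
    using h by (intro generate_incl) auto
  ultimately show ?thesis using U4_derived2[OF p2] by blast
qed

lemma U4_relator:
  assumes p2: "p \<ge> 2" and d: "d \<ge> 3" and n: "n \<ge> 2" and s: "s \<in> S2 p d" and h: "h \<in> {1..d} \<rightarrow> carrier (U4 p)"
  shows "relator p d f n s (U4 p) h = h 1 [^]\<^bsub>U4 p\<^esub> qexp p f \<otimes>\<^bsub>U4 p\<^esub>
    mkp p 0 0 0 (\<Sum>i\<leftarrow>[1..<(d + 1) div 2]. cxx (h (2 * i)) (h (2 * i + 1)))
      (\<Sum>i\<leftarrow>[1..<(d + 1) div 2]. cyy (h (2 * i)) (h (2 * i + 1)))
      ((if n = 2 then cxx (h 1) (h 2) * h 2 2 3 - h 2 0 1 * cyy (h 1) (h 2) else 0) +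
       (\<Sum>i\<leftarrow>[1..<(d + 1) div 2]. czz (h (2 * i)) (h (2 * i + 1))))"
proof -
  interpret group "U4 p" using U4_group[OF p2] .
  have s1: "s (U4 p) h = \<one>\<^bsub>U4 p\<^esub>" by (rule U4_s_one[OF p2 s h])
  have h123: "h 1 \<in> carrier (U4 p)" "h 2 \<in> carrier (U4 p)" "h 3 \<in> carrier (U4 p)" using h d by auto
  have L: "map (\<lambda>i. comm (U4 p) (h (2 * i)) (h (2 * i + 1))) [2..<(d + 1) div 2] =
    map (\<lambda>i. mkp p 0 0 0 (cxx (h (2 * i)) (h (2 * i + 1))) (cyy (h (2 * i)) (h (2 * i + 1))) (czz (h (2 * i)) (h (2 * i + 1)))) [2..<(d + 1) div 2]"
  proof (rule map_cong[OF refl])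
    fix i assume "i \<in> set [2..<(d + 1) div 2]"
    then have "h (2 * i) \<in> carrier (U4 p)" "h (2 * i + 1) \<in> carrier (U4 p)" using h pair_le by blast+
    then show "comm (U4 p) (h (2 * i)) (h (2 * i + 1)) = mkp p 0 0 0 (cxx (h (2 * i)) (h (2 * i + 1))) (cyy (h (2 * i)) (h (2 * i + 1))) (czz (h (2 * i)) (h (2 * i + 1)))"
      using U4_comm_gen[OF p2] by blast
  qed
  have O: "oprod (U4 p) (map (\<lambda>i. comm (U4 p) (h (2 * i)) (h (2 * i + 1))) [2..<(d + 1) div 2]) =
    mkp p 0 0 0 (\<Sum>i\<leftarrow>[2..<(d + 1) div 2]. cxx (h (2 * i)) (h (2 * i + 1)))
      (\<Sum>i\<leftarrow>[2..<(d + 1) div 2]. cyy (h (2 * i)) (h (2 * i + 1)))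
      (\<Sum>i\<leftarrow>[2..<(d + 1) div 2]. czz (h (2 * i)) (h (2 * i + 1)))"
    unfolding L by (rule oprod_K[OF p2])
  have T: "itcomm (U4 p) (h 1) (h 2) n = mkp p 0 0 0 0 0 (if n = 2 then cxx (h 1) (h 2) * h 2 2 3 - h 2 0 1 * cyy (h 1) (h 2) else 0)"
    by (rule U4_itcomm[OF p2 h123(1,2) n])
  have C: "comm (U4 p) (h 2) (h 3) = mkp p 0 0 0 (cxx (h 2) (h 3)) (cyy (h 2) (h 3)) (czz (h 2) (h 3))"
    by (rule U4_comm_gen[OF p2 h123(2,3)])
  have up: "[1..<(d + 1) div 2] = 1 # [2..<(d + 1) div 2]" proof -
    have "1 < (d + 1) div 2" using d by simp
    then show ?thesis using upt_conv_Cons[of 1 "(d + 1) div 2"] by (simp add: numeral_2_eq_2)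
  qed
  have "relator p d f n s (U4 p) h = h 1 [^]\<^bsub>U4 p\<^esub> qexp p f \<otimes>\<^bsub>U4 p\<^esub>
     (mkp p 0 0 0 0 0 (if n = 2 then cxx (h 1) (h 2) * h 2 2 3 - h 2 0 1 * cyy (h 1) (h 2) else 0) \<otimes>\<^bsub>U4 p\<^esub>
      mkp p 0 0 0 (cxx (h 2) (h 3)) (cyy (h 2) (h 3)) (czz (h 2) (h 3)) \<otimes>\<^bsub>U4 p\<^esub>
      mkp p 0 0 0 (\<Sum>i\<leftarrow>[2..<(d + 1) div 2]. cxx (h (2 * i)) (h (2 * i + 1)))
      (\<Sum>i\<leftarrow>[2..<(d + 1) div 2]. cyy (h (2 * i)) (h (2 * i + 1)))
      (\<Sum>i\<leftarrow>[2..<(d + 1) div 2]. czz (h (2 * i)) (h (2 * i + 1))))"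
    unfolding relator_def s1 T C O using h123 by (simp add: m_assoc mkp_U4[OF p2])
  also have "\<dots> = h 1 [^]\<^bsub>U4 p\<^esub> qexp p f \<otimes>\<^bsub>U4 p\<^esub>
    mkp p 0 0 0 (\<Sum>i\<leftarrow>[1..<(d + 1) div 2]. cxx (h (2 * i)) (h (2 * i + 1)))
      (\<Sum>i\<leftarrow>[1..<(d + 1) div 2]. cyy (h (2 * i)) (h (2 * i + 1)))
      ((if n = 2 then cxx (h 1) (h 2) * h 2 2 3 - h 2 0 1 * cyy (h 1) (h 2) else 0) +
       (\<Sum>i\<leftarrow>[1..<(d + 1) div 2]. czz (h (2 * i)) (h (2 * i + 1))))"
  proof -
    have e: "(2::nat) * 1 + 1 = 3" "(2::nat) * 1 = 2" by simp_all
    have h3: "h (Suc (Suc (Suc 0))) = h 3" by (simp add: numeral_3_eq_3)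
    show ?thesis unfolding up list.map sum_list.Cons e using p2 by (simp add: U4_mult mkp_eq_iff algebra_simps h3)
  qed
  finally show ?thesis .
qed




lemma pow_one_crit: assumes p2: "p \<ge> 2" and M: "M \<in> carrier (U4 p)"
  and d1: "p dvd N" and d2: "p dvd (N choose 2)" and d3: "p dvd (N choose 3)"
  shows "M [^]\<^bsub>U4 p\<^esub> N = \<one>\<^bsub>U4 p\<^esub>"
proof -
  have i: "int p dvd int N" "int p dvd int (N choose 2)" "int p dvd int (N choose 3)"
    using d1 d2 d3 by simp_all
  obtain a b c x y z where "M = mkp p a b c x y z" using M by (rule U4_carrierE)
  then show ?thesis using p2 i
    by (simp add: U4_pow U4_one mkp_eq_iff mod_eq_0_iff_dvd dvd_mult2 mult.assoc)
qed

lemma c93: "(9::nat) choose 3 = 84"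
proof -
  have "3 * ((9::nat) choose 3) = 9 * (8 choose 2)" using times_binomial_minus1_eq[of 3 9] by simp
  moreover have "(8::nat) choose 2 = 28" by (simp add: choose_two)
  ultimately show ?thesis by simp
qed

lemma pow_trivial:
  assumes pr: "Factorial_Ring.prime p" and f1: "f \<ge> 1" and f2: "p = 2 \<longrightarrow> f \<ge> 2"
    and q3: "qexp p f \<noteq> 3" and M: "M \<in> carrier (U4 p)"
  shows "M [^]\<^bsub>U4 p\<^esub> qexp p f = \<one>\<^bsub>U4 p\<^esub>"
proof -
  have p2: "p \<ge> 2" using pr by (simp add: prime_ge_2_nat)
  interpret group "U4 p" using U4_group[OF p2] .
  show ?thesis
  proof (cases f)
    case infinity
    then show ?thesis by (simp add: qexp_def)
  next
    case (enat k)
    then have k1: "k \<ge> 1" using f1 by (simp add: one_enat_def)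
    have q: "qexp p f = p ^ k" using enat by (simp add: qexp_def)
    have "\<exists>N m. p ^ k = N * m \<and> M [^]\<^bsub>U4 p\<^esub> N = \<one>\<^bsub>U4 p\<^esub>"
    proof (cases "p = 2")
      case True
      then have "k \<ge> 2" using f2 enat by (simp add: numeral_eq_enat)
      then obtain j where "k = j + 2" using le_Suc_ex by (metis add.commute)
      then have "p ^ k = 4 * 2 ^ j" using True by (simp add: power_add)
      moreover have "M [^]\<^bsub>U4 p\<^esub> (4::nat) = \<one>\<^bsub>U4 p\<^esub>"
      proof -
        have c: "(4::nat) choose 2 = 6" "(4::nat) choose 3 = 4" by (simp_all add: eval_nat_numeral)
        show ?thesis using True M by (intro pow_one_crit) (simp_all only: c, simp_all)
      qed
      ultimately show ?thesis by blast
    next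
      case False
      show ?thesis
      proof (cases "p = 3")
        case True
        then have "k \<noteq> 1" using q3 q by auto
        then have "k \<ge> 2" using k1 by simp
        then obtain j where "k = j + 2" using le_Suc_ex by (metis add.commute)
        then have "p ^ k = 9 * 3 ^ j" using True by (simp add: power_add)
        moreover have "M [^]\<^bsub>U4 p\<^esub> (9::nat) = \<one>\<^bsub>U4 p\<^esub>"
        proof -
          have c: "(9::nat) choose 2 = 36" "(9::nat) choose 3 = 84" by (simp add: choose_two, rule c93)
          show ?thesis using True M by (intro pow_one_crit) (simp_all only: c, simp_all)
        qed
        ultimately show ?thesis by blast
      next
        case False3: False
        have "\<not> Factorial_Ring.prime (4::nat)"
        proof
          assume "Factorial_Ring.prime (4::nat)"
          then have "\<forall>m. m dvd 4 \<longrightarrow> m = 1 \<or> m = (4::nat)" by (simp add: prime_nat_iff)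
          moreover have "(2::nat) dvd 4" by simp
          ultimately have "(2::nat) = 1 \<or> (2::nat) = 4" by blast
          then show False by simp
        qed
        then have "p \<noteq> 4" using pr by auto
        then have p5: "p \<ge> 5" using p2 False False3 by linarith
        obtain j where "k = Suc j" using k1 by (cases k) auto
        then have "p ^ k = p * p ^ j" by simp
        moreover have "M [^]\<^bsub>U4 p\<^esub> p = \<one>\<^bsub>U4 p\<^esub>"
        proof (rule pow_one_crit[OF p2 M])
          show "p dvd p" by simp
          show "p dvd (p choose 2)" using p5 pr by (intro dvd_choose_prime) auto
          show "p dvd (p choose 3)" using p5 pr by (intro dvd_choose_prime) auto
        qed
        ultimately show ?thesis by blast
      qed
    qed
    then obtain N m where "p ^ k = N * m" "M [^]\<^bsub>U4 p\<^esub> N = \<one>\<^bsub>U4 p\<^esub>" by blast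
    then show ?thesis using q M by (simp add: nat_pow_pow[symmetric])
  qed
qed

lemma pow3: assumes "M \<in> carrier (U4 3)"
  shows "M [^]\<^bsub>U4 3\<^esub> (3::nat) = mkp 3 0 0 0 0 0 (M 0 1 * M 1 2 * M 2 3)"
proof -
  have e: "M = mkp 3 (M 0 1) (M 1 2) (M 2 3) (M 0 2) (M 1 3) (M 0 3)" using U4_carrier_mkp[OF assms] .
  have c2: "(3::nat) choose 2 = 3" "(3::nat) choose 3 = 1" by (simp_all add: eval_nat_numeral)
  have "M [^]\<^bsub>U4 3\<^esub> (3::nat) = mkp 3 (3 * M 0 1) (3 * M 1 2) (3 * M 2 3) (3 * (M 0 2 + M 0 1 * M 1 2)) (3 * (M 1 3 + M 1 2 * M 2 3))
     (M 0 1 * M 1 2 * M 2 3 + 3 * (M 0 3 + M 0 1 * M 1 3 + M 0 2 * M 2 3))"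
    by (subst e, subst U4_pow) (simp_all add: c2 mkp_eq_iff algebra_simps)
  also have "\<dots> = mkp 3 0 0 0 0 0 (M 0 1 * M 1 2 * M 2 3)"
    unfolding mkp_eq_iff by (metis mod_mult_self2 mod_mult_self1_is_0 mod_0 of_nat_numeral)
  finally show ?thesis .
qed

lemma solve_mod: assumes pr: "Factorial_Ring.prime p" and nd: "\<not> int p dvd \<alpha>"
  shows "\<exists>t. (\<alpha> * t) mod int p = c mod int p"
proof -
  have "Factorial_Ring.prime (int p)" using pr by simp
  then have "coprime (int p) \<alpha>" using nd by (rule prime_imp_coprime)
  then have "coprime \<alpha> (int p)" by (simp add: ac_simps)
  then have "gcd \<alpha> (int p) = 1" by (rule coprime_imp_gcd_eq_1)
  then obtain u v where uv: "u * \<alpha> + v * int p = 1" using bezout_int[of \<alpha> "int p"] by auto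
  have "u * \<alpha> = 1 - v * int p" using uv by linarith
  then have "\<alpha> * (u * c) = c * (1 - v * int p)" by (metis mult.assoc mult.commute)
  then have "\<alpha> * (u * c) = c + int p * (- v * c)" by (simp add: algebra_simps)
  then have "(\<alpha> * (u * c)) mod int p = (c + int p * (- v * c)) mod int p" by simp
  also have "\<dots> = c mod int p" by (rule mod_mult_self2)
  finally show ?thesis by blast
qed

lemma sum_list_zero: "(\<And>i. i \<in> set L \<Longrightarrow> f i = (0::int)) \<Longrightarrow> (\<Sum>i\<leftarrow>L. f i) = 0"
  by (induction L) auto

lemma sum_list_eq: "(\<And>i. i \<in> set L \<Longrightarrow> f i = (g i::int)) \<Longrightarrow> (\<Sum>i\<leftarrow>L. f i) = (\<Sum>i\<leftarrow>L. g i)"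
  by (induction L) auto

lemma sum_list_change:
  assumes "distinct L" "i0 \<in> set L" "\<And>i. i \<in> set L \<Longrightarrow> i \<noteq> i0 \<Longrightarrow> f2 i = f i"
    "f2 i0 mod m = (f i0 + D) mod m"
  shows "(\<Sum>i\<leftarrow>L. f2 i) mod m = ((\<Sum>i\<leftarrow>L. f i) + D) mod (m::int)"
  using assms
proof (induction L)
  case Nil then show ?case by simp
next
  case (Cons a L)
  show ?case
  proof (cases "a = i0")
    case True
    then have "i0 \<notin> set L" using Cons by simp
    then have S: "(\<Sum>i\<leftarrow>L. f2 i) = (\<Sum>i\<leftarrow>L. f i)" using Cons by (intro sum_list_eq) auto
    have "(f2 a + (\<Sum>i\<leftarrow>L. f2 i)) mod m = ((f a + D) + (\<Sum>i\<leftarrow>L. f i)) mod m"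
      using True Cons(5) S by (intro mcong_add) auto
    then show ?thesis by (simp add: ac_simps)
  next
    case False
    then have IH: "(\<Sum>i\<leftarrow>L. f2 i) mod m = ((\<Sum>i\<leftarrow>L. f i) + D) mod m" using Cons by auto
    have "f2 a = f a" using Cons False by auto
    then have "(f2 a + (\<Sum>i\<leftarrow>L. f2 i)) mod m = (f a + ((\<Sum>i\<leftarrow>L. f i) + D)) mod m"
      using IH by (intro mcong_add) auto
    then show ?thesis by (simp add: ac_simps)
  qed
qed




lemma pair_le2: "i \<in> set [1..<(d + 1) div 2] \<Longrightarrow> 2 * i \<in> {2..d} \<and> 2 * i + 1 \<in> {2..d}"
  by auto

lemma U4_relator_B:
  assumes p2: "p \<ge> 2" and d: "d \<ge> 3" and n: "n \<ge> 2" and s: "s \<in> S2 p d" and h: "h \<in> {1..d} \<rightarrow> carrier (U4 p)"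
    and z: "\<forall>j\<in>{2..d}. h j 0 1 = 0 \<and> h j 2 3 = 0"
  shows "relator p d f n s (U4 p) h = h 1 [^]\<^bsub>U4 p\<^esub> qexp p f"
proof -
  interpret group "U4 p" using U4_group[OF p2] .
  have zi: "\<And>i. i \<in> set [1..<(d + 1) div 2] \<Longrightarrow> h (2 * i) 0 1 = 0 \<and> h (2 * i) 2 3 = 0 \<and> h (2 * i + 1) 0 1 = 0 \<and> h (2 * i + 1) 2 3 = 0"
    using z pair_le2 by blast
  have X: "(\<Sum>i\<leftarrow>[1..<(d + 1) div 2]. cxx (h (2 * i)) (h (2 * i + 1))) = 0"
    by (rule sum_list_zero) (drule zi, simp add: cxx_def)
  have Y: "(\<Sum>i\<leftarrow>[1..<(d + 1) div 2]. cyy (h (2 * i)) (h (2 * i + 1))) = 0"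
    by (rule sum_list_zero) (drule zi, simp add: cyy_def)
  have Z: "(\<Sum>i\<leftarrow>[1..<(d + 1) div 2]. czz (h (2 * i)) (h (2 * i + 1))) = 0"
    by (rule sum_list_zero) (drule zi, simp add: czz_def)
  have h2: "h 2 0 1 = 0" "h 2 2 3 = 0" using z d by auto
  have h1: "h 1 \<in> carrier (U4 p)" using h d by auto
  show ?thesis unfolding U4_relator[OF p2 d n s h] X Y Z h2
    using h1 by (simp add: U4_one[symmetric])
qed

lemma p_is_3: assumes pr: "Factorial_Ring.prime p" and q: "qexp p f = 3" shows "p = 3"
proof (cases f)
  case infinity then show ?thesis using q by (simp add: qexp_def)
next
  case (enat k)
  then have pk: "p ^ k = 3" using q by (simp add: qexp_def)
  then have "k \<noteq> 0" by (cases k) auto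
  then have "p dvd 3" using pk by (metis dvd_power dvd_refl not_gr0)
  then have "p \<le> 3" by (simp add: dvd_imp_le)
  moreover have "p \<ge> 2" using pr by (simp add: prime_ge_2_nat)
  moreover have "p \<noteq> 2" using \<open>p dvd 3\<close> by auto
  ultimately show ?thesis by linarith
qed

lemma pr_U4Z: "M \<in> carrier (U4Z p) \<Longrightarrow> pr M = M"
  by (metis U4Z_carrierE pr_mkp)

lemma pr_entries: "pr M 0 1 = M 0 1" "pr M 1 2 = M 1 2" "pr M 2 3 = M 2 3"
  unfolding pr_def by simp_all

lemma dir3:
  assumes pr: "Factorial_Ring.prime p" and d: "d \<ge> 3" and n: "n \<ge> 2" and s: "s \<in> S2 p d"
    and q: "qexp p f = 3"
  shows "\<not> (\<forall>\<psi> :: nat \<Rightarrow> nat \<Rightarrow> mat.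
            (\<forall>i\<in>{1..3}. pres_hom p d f n s (Fp_grp p) (\<psi> i)) \<longrightarrow>
            (\<exists>g. pres_hom p d f n s (U4Z p) g \<and> entries_match d \<psi> g) \<longrightarrow>
            (\<exists>g. pres_hom p d f n s (U4 p) g \<and> entries_match d \<psi> g))"
proof -
  have p3: "p = 3" using p_is_3[OF pr q] .
  have p2: "p \<ge> 2" using p3 by simp
  define g0 :: "nat \<Rightarrow> mat" where "g0 j = (if j = 1 then mkp p 1 1 1 0 0 0 else mkp p 0 0 0 0 0 0)" for j
  define \<psi> :: "nat \<Rightarrow> nat \<Rightarrow> mat" where "\<psi> i j = pj (i - 1) (g0 j)" for i j
  have sf: "s \<in> free_pro_p p d" using s unfolding S2_def by blast
  have g0c: "g0 \<in> {1..d} \<rightarrow> carrier (U4 p)" unfolding g0_def using mkp_U4[OF p2] by auto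
  have g0e: "g0 1 0 1 = 1" "g0 1 1 2 = 1" "g0 1 2 3 = 1" unfolding g0_def using p3 by (simp_all add: mkp_entries mkp_entries_S)
  have g0z: "\<forall>j\<in>{2..d}. g0 j 0 1 = 0 \<and> g0 j 1 2 = 0 \<and> g0 j 2 3 = 0" unfolding g0_def by (auto simp: mkp_entries mkp_entries_S)
  have R0: "relator p d f n s (U4 p) g0 = mkp p 0 0 0 0 0 1"
  proof -
    have "relator p d f n s (U4 p) g0 = g0 1 [^]\<^bsub>U4 p\<^esub> (3::nat)"
      using U4_relator_B[OF p2 d n s g0c] g0z q by auto
    also have "\<dots> = mkp p 0 0 0 0 0 1"
    proof -
      have "g0 1 \<in> carrier (U4 p)" using g0c d by auto
      then show ?thesis using pow3[of "g0 1"] g0e p3 by simp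
    qed
    finally show ?thesis .
  qed
  have A: "\<forall>i\<in>{1..3}. pres_hom p d f n s (Fp_grp p) (\<psi> i)"
  proof
    fix i :: nat assume i: "i \<in> {1..3}"
    then have k: "i - 1 \<in> {0, 1, 2}" by auto
    have hom: "pj (i - 1) \<in> hom (U4 p) (Fp_grp p)" using pj_hom[OF p2 k] .
    have e: "\<psi> i = pj (i - 1) \<circ> g0" unfolding \<psi>_def by auto
    have "relator p d f n s (Fp_grp p) (\<psi> i) = pj (i - 1) (relator p d f n s (U4 p) g0)"
      unfolding e using relator_hom[OF fin_U4[OF p2] fin_Fp[OF p2] hom g0c sf d] by simp
    also have "\<dots> = \<one>\<^bsub>Fp_grp p\<^esub>" unfolding R0 using k by (auto simp: pj_mkp Fp_one)
    finally have "relator p d f n s (Fp_grp p) (\<psi> i) = \<one>\<^bsub>Fp_grp p\<^esub>" .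
    moreover have "\<psi> i \<in> {1..d} \<rightarrow> carrier (Fp_grp p)"
      unfolding e using hom g0c hom_in_carrier by fastforce
    ultimately show "pres_hom p d f n s (Fp_grp p) (\<psi> i)" unfolding pres_hom_def by blast
  qed
  have em: "entries_match d \<psi> g \<longleftrightarrow> (\<forall>j\<in>{1..d}. \<forall>i\<in>{1..3}. g j (i - 1) i = g0 j (i - 1) i)" for g
    unfolding entries_match_def \<psi>_def pj_def cst_def by auto
  have B: "\<exists>g. pres_hom p d f n s (U4Z p) g \<and> entries_match d \<psi> g"
  proof (intro exI conjI)
    have "relator p d f n s (U4Z p) (pr \<circ> g0) = pr (relator p d f n s (U4 p) g0)"
      using relator_hom[OF fin_U4[OF p2] fin_U4Z[OF p2] pr_hom[OF p2] g0c sf d] by simp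
    also have "\<dots> = \<one>\<^bsub>U4Z p\<^esub>" unfolding R0 pr_mkp U4Z_one ..
    finally show "pres_hom p d f n s (U4Z p) (pr \<circ> g0)"
      unfolding pres_hom_def using pr_hom[OF p2] g0c hom_in_carrier by fastforce
    have "\<forall>i\<in>{1..3::nat}. i - 1 = 0 \<and> i = 1 \<or> i - 1 = 1 \<and> i = 2 \<or> i - 1 = 2 \<and> i = 3" by auto
    then show "entries_match d \<psi> (pr \<circ> g0)" unfolding em using pr_entries by fastforce
  qed
  have C: "\<not> (\<exists>g. pres_hom p d f n s (U4 p) g \<and> entries_match d \<psi> g)"
  proof
    assume "\<exists>g. pres_hom p d f n s (U4 p) g \<and> entries_match d \<psi> g"
    then obtain h where h: "h \<in> {1..d} \<rightarrow> carrier (U4 p)" "relator p d f n s (U4 p) h = \<one>\<^bsub>U4 p\<^esub>"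
      and e: "\<forall>j\<in>{1..d}. \<forall>i\<in>{1..3}. h j (i - 1) i = g0 j (i - 1) i"
      unfolding pres_hom_def em by blast
    have ei: "\<And>j. j \<in> {1..d} \<Longrightarrow> h j 0 1 = g0 j 0 1 \<and> h j 1 2 = g0 j 1 2 \<and> h j 2 3 = g0 j 2 3"
    proof -
      fix j assume j: "j \<in> {1..d}"
      show "h j 0 1 = g0 j 0 1 \<and> h j 1 2 = g0 j 1 2 \<and> h j 2 3 = g0 j 2 3"
        using e[rule_format, OF j, of 1] e[rule_format, OF j, of 2] e[rule_format, OF j, of 3] by simp
    qed
    have hz: "\<forall>j\<in>{2..d}. h j 0 1 = 0 \<and> h j 2 3 = 0" using ei g0z by fastforce
    have "relator p d f n s (U4 p) h = h 1 [^]\<^bsub>U4 p\<^esub> (3::nat)"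
      using U4_relator_B[OF p2 d n s h(1) hz] q by auto
    also have "\<dots> = mkp p 0 0 0 0 0 1"
    proof -
      have "h 1 \<in> carrier (U4 p)" "1 \<in> {1..d}" using h(1) d by auto
      then show ?thesis using pow3[of "h 1"] ei[of 1] g0e p3 by simp
    qed
    finally have "mkp p 0 0 0 0 0 1 = mkp p 0 0 0 0 0 0" using h(2) U4_one by metis
    then show False using p3 by (simp add: mkp_eq_iff)
  qed
  show ?thesis using A B C by blast
qed




lemma mod_decomp: "(a::int) mod m = a - m * (a div m)"
  using mod_div_mult_eq[of a m] by (simp add: algebra_simps)

lemma czz_modR:
  assumes r: "B 0 1 \<in> {0..<int p}" "B 1 2 \<in> {0..<int p}" "B 2 3 \<in> {0..<int p}"
  shows "czz A (mkp p (B 0 1) (B 1 2) (B 2 3) (B 0 2 + u) (B 1 3 + v) 0) mod int p =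
    (czz A B + (A 0 1 * v - u * A 2 3)) mod int p"
proof -
  define k1 where "k1 = (B 1 3 + v) div int p"
  define k2 where "k2 = (B 0 2 + u) div int p"
  have "czz A (mkp p (B 0 1) (B 1 2) (B 2 3) (B 0 2 + u) (B 1 3 + v) 0) =
     czz A B + (A 0 1 * v - u * A 2 3) + int p * (k2 * A 2 3 - A 0 1 * k1)"
    unfolding czz_def mkp_entries using r by (simp add: mod_decomp k1_def k2_def algebra_simps)
  then show ?thesis by simp
qed

lemma czz_modL:
  assumes r: "A 0 1 \<in> {0..<int p}" "A 1 2 \<in> {0..<int p}" "A 2 3 \<in> {0..<int p}"
  shows "czz (mkp p (A 0 1) (A 1 2) (A 2 3) (A 0 2 + u) (A 1 3 + v) 0) B mod int p =
    (czz A B + (u * B 2 3 - B 0 1 * v)) mod int p"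
proof -
  define k1 where "k1 = (A 1 3 + v) div int p"
  define k2 where "k2 = (A 0 2 + u) div int p"
  have "czz (mkp p (A 0 1) (A 1 2) (A 2 3) (A 0 2 + u) (A 1 3 + v) 0) B =
     czz A B + (u * B 2 3 - B 0 1 * v) + int p * (B 0 1 * k1 - k2 * B 2 3)"
    unfolding czz_def mkp_entries using r by (simp add: mod_decomp k1_def k2_def algebra_simps)
  then show ?thesis by simp
qed

lemma solve2:
  assumes pr: "Factorial_Ring.prime p" and ab: "\<not> (int p dvd \<alpha> \<and> int p dvd \<beta>)" and sg: "\<sigma> = 1 \<or> \<sigma> = -1"
  shows "\<exists>u v. (Z + \<sigma> * (\<alpha> * v - \<beta> * u)) mod int p = 0"
proof (cases "int p dvd \<alpha>")
  case False
  obtain t where t: "(\<alpha> * t) mod int p = (- \<sigma> * Z) mod int p" using solve_mod[OF pr False] by blast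
  have 1: "(Z + \<sigma> * (\<alpha> * t - \<beta> * 0)) mod int p = (Z + \<sigma> * (\<alpha> * t)) mod int p" by simp
  have 2: "(Z + \<sigma> * (\<alpha> * t)) mod int p = (Z + \<sigma> * (- \<sigma> * Z)) mod int p" by (rule mcong_add[OF refl mcong_mult[OF refl t]])
  have 3: "Z + \<sigma> * (- \<sigma> * Z) = 0" using sg by (elim disjE) simp_all
  have 4: "(Z + \<sigma> * (\<alpha> * t - \<beta> * 0)) mod int p = (Z + \<sigma> * (- \<sigma> * Z)) mod int p"
    using 1 2 by (rule trans)
  have "(Z + \<sigma> * (\<alpha> * t - \<beta> * 0)) mod int p = 0"
    using 4 by (simp only: 3 mod_0)
  then show ?thesis by (intro exI)
next
  case True
  then have nb: "\<not> int p dvd \<beta>" using ab by blast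
  obtain t where t: "(\<beta> * t) mod int p = (\<sigma> * Z) mod int p" using solve_mod[OF pr nb] by blast
  have 1: "(Z + \<sigma> * (\<alpha> * 0 - \<beta> * t)) mod int p = (Z + (- \<sigma>) * (\<beta> * t)) mod int p" by simp
  have 2: "(Z + (- \<sigma>) * (\<beta> * t)) mod int p = (Z + (- \<sigma>) * (\<sigma> * Z)) mod int p" by (rule mcong_add[OF refl mcong_mult[OF refl t]])
  have 3: "Z + (- \<sigma>) * (\<sigma> * Z) = 0" using sg by (elim disjE) simp_all
  have 4: "(Z + \<sigma> * (\<alpha> * 0 - \<beta> * t)) mod int p = (Z + (- \<sigma>) * (\<sigma> * Z)) mod int p"
    using 1 2 by (rule trans)
  have "(Z + \<sigma> * (\<alpha> * 0 - \<beta> * t)) mod int p = 0"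
    using 4 by (simp only: 3 mod_0)
  then show ?thesis by (intro exI)
qed




lemma range_not_dvd: assumes "a \<in> {0..<int p}" "a \<noteq> 0" shows "\<not> int p dvd a"
proof
  assume "int p dvd a"
  moreover have "0 < a" using assms by auto
  ultimately have "int p \<le> a" by (rule zdvd_imp_le)
  then show False using assms by auto
qed

lemma dir_main:
  assumes pr: "Factorial_Ring.prime p" and dodd: "odd d" and d: "d \<ge> 3" and n: "n \<ge> 2"
    and f1: "f \<ge> 1" and f2: "p = 2 \<longrightarrow> f \<ge> 2" and s: "s \<in> S2 p d" and q3: "qexp p f \<noteq> 3"
    and g: "pres_hom p d f n s (U4Z p) g" and em: "entries_match d \<psi> g"
  shows "\<exists>h. pres_hom p d f n s (U4 p) h \<and> entries_match d \<psi> h"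
proof -
  have p2: "p \<ge> 2" using pr by (simp add: prime_ge_2_nat)
  interpret group "U4 p" using U4_group[OF p2] .
  have gZ: "g \<in> {1..d} \<rightarrow> carrier (U4Z p)" and gR: "relator p d f n s (U4Z p) g = \<one>\<^bsub>U4Z p\<^esub>"
    using g unfolding pres_hom_def by auto
  have gc: "g \<in> {1..d} \<rightarrow> carrier (U4 p)" using gZ U4Z_sub by blast
  have sf: "s \<in> free_pro_p p d" using s unfolding S2_def by blast
  define L where "L = [1..<(d + 1) div 2]"
  define SX where "SX k = (\<Sum>i\<leftarrow>L. cxx (k (2 * i)) (k (2 * i + 1)))" for k :: "nat \<Rightarrow> mat"
  define SY where "SY k = (\<Sum>i\<leftarrow>L. cyy (k (2 * i)) (k (2 * i + 1)))" for k :: "nat \<Rightarrow> mat"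
  define SZ where "SZ k = (\<Sum>i\<leftarrow>L. czz (k (2 * i)) (k (2 * i + 1)))" for k :: "nat \<Rightarrow> mat"
  define TAU where "TAU k = (if n = 2 then cxx (k 1) (k 2) * k 2 2 3 - k 2 0 1 * cyy (k 1) (k 2) else 0)" for k :: "nat \<Rightarrow> mat"
  have RK: "relator p d f n s (U4 p) k = mkp p 0 0 0 (SX k) (SY k) (TAU k + SZ k)"
    if k: "k \<in> {1..d} \<rightarrow> carrier (U4 p)" for k
  proof -
    have k1: "k 1 \<in> carrier (U4 p)" using k d by auto
    have "relator p d f n s (U4 p) k = k 1 [^]\<^bsub>U4 p\<^esub> qexp p f \<otimes>\<^bsub>U4 p\<^esub> mkp p 0 0 0 (SX k) (SY k) (TAU k + SZ k)"
      unfolding SX_def SY_def SZ_def TAU_def L_def by (rule U4_relator[OF p2 d n s k])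
    also have "\<dots> = mkp p 0 0 0 (SX k) (SY k) (TAU k + SZ k)"
      using pow_trivial[OF pr f1 f2 q3 k1] mkp_U4[OF p2] by simp
    finally show ?thesis .
  qed
  show ?thesis
  proof (cases "\<forall>j\<in>{2..d}. g j 0 1 = 0 \<and> g j 2 3 = 0")
    case True
    have g1: "g 1 \<in> carrier (U4 p)" using gc d by auto
    have "relator p d f n s (U4 p) g = \<one>\<^bsub>U4 p\<^esub>"
      using U4_relator_B[OF p2 d n s gc True] pow_trivial[OF pr f1 f2 q3 g1] by simp
    then show ?thesis using gc em unfolding pres_hom_def by blast
  next
    case False
    then obtain j0 where j0: "j0 \<in> {2..d}" "g j0 0 1 \<noteq> 0 \<or> g j0 2 3 \<noteq> 0" by blast
    define i0 where "i0 = j0 div 2"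
    define jp where "jp = (if even j0 then j0 + 1 else j0 - 1)"
    define \<sigma> :: int where "\<sigma> = (if even j0 then 1 else -1)"
    have i0L: "i0 \<in> set L" unfolding L_def i0_def using j0(1) dodd by (auto elim!: oddE)
    have jp: "jp \<in> {2..d}" unfolding jp_def using j0(1) dodd by (auto elim!: oddE)
    have pos: "(even j0 \<longrightarrow> 2 * i0 = j0 \<and> 2 * i0 + 1 = jp) \<and> (odd j0 \<longrightarrow> 2 * i0 = jp \<and> 2 * i0 + 1 = j0)"
      unfolding i0_def jp_def by auto
    have jp1: "jp \<noteq> 1" "jp \<noteq> j0" using jp pos by auto
    define \<alpha> where "\<alpha> = g j0 0 1"
    define \<beta> where "\<beta> = g j0 2 3"
    have gj0: "g j0 \<in> unitri4 p" using gc j0(1) U4_carrier by auto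
    have ab: "\<not> (int p dvd \<alpha> \<and> int p dvd \<beta>)"
      using j0(2) range_not_dvd unitri_range[OF gj0] unfolding \<alpha>_def \<beta>_def by blast
    have sg: "\<sigma> = 1 \<or> \<sigma> = -1" unfolding \<sigma>_def by auto
    have RG: "relator p d f n s (U4 p) g = mkp p 0 0 0 (SX g) (SY g) (TAU g + SZ g)" by (rule RK[OF gc])
    have XY: "SX g mod int p = 0 \<and> SY g mod int p = 0"
    proof -
      have "pr (relator p d f n s (U4 p) g) = relator p d f n s (U4Z p) (pr \<circ> g)"
        by (rule relator_hom[OF fin_U4[OF p2] fin_U4Z[OF p2] pr_hom[OF p2] gc sf d])
      also have "\<dots> = relator p d f n s (U4Z p) g"
      proof -
        have "\<forall>i\<in>{1..d}. g i = (pr \<circ> g) i"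
        proof
          fix i assume "i \<in> {1..d}"
          then have "g i \<in> carrier (U4Z p)" using gZ by (rule funcset_mem[rotated])
          then show "g i = (pr \<circ> g) i" using pr_U4Z by simp
        qed
        then show ?thesis by (rule sym[OF relator_cong[OF fin_U4Z[OF p2] gZ _ sf d]])
      qed
      finally have "mkp p 0 0 0 (SX g) (SY g) 0 = mkp p 0 0 0 0 0 0"
        unfolding RG pr_mkp gR U4Z_one .
      then show ?thesis by (simp add: mkp_eq_iff)
    qed
    have "\<exists>u v. (TAU g + SZ g + \<sigma> * (\<alpha> * v - \<beta> * u)) mod int p = 0"
      by (rule solve2[OF pr ab sg])
    then obtain u v where uv: "(TAU g + SZ g + \<sigma> * (\<alpha> * v - \<beta> * u)) mod int p = 0"
      by (elim exE) (erule that)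
    define B where "B = g jp"
    have Bu: "B \<in> unitri4 p" unfolding B_def using gc jp U4_carrier by auto
    note Br = unitri_range[OF Bu]
    define h where "h = g(jp := mkp p (B 0 1) (B 1 2) (B 2 3) (B 0 2 + u) (B 1 3 + v) 0)"
    have hc: "h \<in> {1..d} \<rightarrow> carrier (U4 p)" unfolding h_def using gc mkp_U4[OF p2] by auto
    have hsd: "h k 0 1 = g k 0 1 \<and> h k 1 2 = g k 1 2 \<and> h k 2 3 = g k 2 3" for k
      unfolding h_def B_def using Br unfolding B_def by (auto simp: mkp_entries mkp_entries_S)
    have hne: "k \<noteq> jp \<Longrightarrow> h k = g k" for k unfolding h_def by simp
    have hE: "entries_match d \<psi> h"
    proof -
      have "\<forall>i\<in>{1..3::nat}. i - 1 = 0 \<and> i = 1 \<or> i - 1 = 1 \<and> i = 2 \<or> i - 1 = 2 \<and> i = 3" by auto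
      then show ?thesis using em hsd unfolding entries_match_def by (metis (no_types, lifting))
    qed
    have cx: "cxx (h a) (h b) = cxx (g a) (g b)" for a b unfolding cxx_def using hsd by simp
    have cy: "cyy (h a) (h b) = cyy (g a) (g b)" for a b unfolding cyy_def using hsd by simp
    have SXh: "SX h = SX g" unfolding SX_def cx ..
    have SYh: "SY h = SY g" unfolding SY_def cy ..
    have TAUh: "TAU h = TAU g" unfolding TAU_def cx cy using hsd by simp
    have SZh: "SZ h mod int p = (SZ g + \<sigma> * (\<alpha> * v - \<beta> * u)) mod int p"
      unfolding SZ_def
    proof (rule sum_list_change[OF _ i0L])
      show "distinct L" unfolding L_def by simp
      fix i assume "i \<in> set L" "i \<noteq> i0"
      then have "2 * i \<noteq> jp" "2 * i + 1 \<noteq> jp" using pos by auto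
      then show "czz (h (2 * i)) (h (2 * i + 1)) = czz (g (2 * i)) (g (2 * i + 1))" using hne by simp
    next
      show "czz (h (2 * i0)) (h (2 * i0 + 1)) mod int p =
        (czz (g (2 * i0)) (g (2 * i0 + 1)) + \<sigma> * (\<alpha> * v - \<beta> * u)) mod int p"
      proof (cases "even j0")
        case True
        then have e: "2 * i0 + 1 = jp" "2 * i0 = j0" "\<sigma> = 1" using pos \<sigma>_def by auto
        have hj0: "h j0 = g j0" using hne jp1 by simp
        show ?thesis unfolding e(1) unfolding e(2,3) hj0 using czz_modR[OF Br(1-3), of "g j0" u v]
          by (simp add: h_def B_def \<alpha>_def \<beta>_def algebra_simps)
      next
        case False
        then have e: "2 * i0 + 1 = j0" "2 * i0 = jp" "\<sigma> = -1" using pos \<sigma>_def by auto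
        have hj0: "h j0 = g j0" using hne jp1 by simp
        show ?thesis unfolding e(1) unfolding e(2,3) hj0 using czz_modL[OF Br(1-3), of u v "g j0"]
          by (simp add: h_def B_def \<alpha>_def \<beta>_def algebra_simps)
      qed
    qed
    have Z0: "(TAU h + SZ h) mod int p = 0"
    proof -
      have "(TAU h + SZ h) mod int p = (TAU g + (SZ g + \<sigma> * (\<alpha> * v - \<beta> * u))) mod int p"
        unfolding TAUh by (rule mcong_add[OF refl SZh])
      then show ?thesis using uv by (simp add: add.assoc)
    qed
    have "relator p d f n s (U4 p) h = mkp p 0 0 0 (SX h) (SY h) (TAU h + SZ h)" by (rule RK[OF hc])
    also have "\<dots> = \<one>\<^bsub>U4 p\<^esub>" unfolding U4_one mkp_eq_iff SXh SYh using XY Z0 by simp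
    finally show ?thesis using hc hE unfolding pres_hom_def by blast
  qed
qed


theorem proposition5p5:
  fixes p d n :: nat and f :: enat and s :: proword
  assumes "Factorial_Ring.prime p" and "odd d" and "d \<ge> 3" and "n \<ge> 2"
    and "f \<ge> 1" and "p = 2 \<longrightarrow> f \<ge> 2"
    and "s \<in> S2 p d"
  shows "(\<forall>\<psi> :: nat \<Rightarrow> nat \<Rightarrow> mat.
            (\<forall>i\<in>{1..3}. pres_hom p d f n s (Fp_grp p) (\<psi> i)) \<longrightarrow>
            (\<exists>g. pres_hom p d f n s (U4Z p) g \<and> entries_match d \<psi> g) \<longrightarrow>
            (\<exists>g. pres_hom p d f n s (U4 p) g \<and> entries_match d \<psi> g))
         \<longleftrightarrow> qexp p f \<noteq> 3"
proof
  assume L: "\<forall>\<psi> :: nat \<Rightarrow> nat \<Rightarrow> mat.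
            (\<forall>i\<in>{1..3}. pres_hom p d f n s (Fp_grp p) (\<psi> i)) \<longrightarrow>
            (\<exists>g. pres_hom p d f n s (U4Z p) g \<and> entries_match d \<psi> g) \<longrightarrow>
            (\<exists>g. pres_hom p d f n s (U4 p) g \<and> entries_match d \<psi> g)"
  show "qexp p f \<noteq> 3"
  proof
    assume "qexp p f = 3"
    from dir3[OF assms(1) assms(3) assms(4) assms(7) this] L show False by blast
  qed
next
  assume q: "qexp p f \<noteq> 3"
  show "\<forall>\<psi> :: nat \<Rightarrow> nat \<Rightarrow> mat.
            (\<forall>i\<in>{1..3}. pres_hom p d f n s (Fp_grp p) (\<psi> i)) \<longrightarrow>
            (\<exists>g. pres_hom p d f n s (U4Z p) g \<and> entries_match d \<psi> g) \<longrightarrow>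
            (\<exists>g. pres_hom p d f n s (U4 p) g \<and> entries_match d \<psi> g)"
  proof (intro allI impI)
    fix \<psi> :: "nat \<Rightarrow> nat \<Rightarrow> mat"
    assume "\<exists>g. pres_hom p d f n s (U4Z p) g \<and> entries_match d \<psi> g"
    then obtain g where "pres_hom p d f n s (U4Z p) g" "entries_match d \<psi> g" by blast
    then show "\<exists>g. pres_hom p d f n s (U4 p) g \<and> entries_match d \<psi> g"
      by (rule dir_main[OF assms(1-7) q])
  qed
qed

end
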